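(* Assume the Eliahou–Kryuchkov conjecture: for any two plane trees all of whose internal vertices are trivalent and which have the same number of twigs, there exist assignments of signs $\pm$ to the internal vertices of the two trees such that one signed tree can be transformed into the other by a finite sequence of signed reassociation moves. Then for any two bracketings $L$ and $R$ of the product of the same ordered sequence of $n$ variables $x_1,\dots,x_n$, there exists an assignment of values from $\{i,j,k\}$ to the variables such that $L=R$ in the vector cross product algebra (with both sides nonzero), together with a sequence of algebraic reassociations $(ab)c\leftrightarrow a(bc)$ applied to subexpressions taking $L$ to $R$ such that every intermediate bracketed product in the sequence is non-zero when evaluated as a vector cross product.
   Context: The vector cross product algebra is the algebra on $\mathbb{R}^3$ with basis $i,j,k$ and product the cross product: $ij=k$, $jk=i$, $ki=j$, $ji=-k$, $kj=-i$, $ik=-j$, $ii=jj=kk=0$. A bracketed product of $n$ ordered variables corresponds to a rooted binary plane tree with $n$ leaves (each trivalent vertex is a product of its two incoming edge labels). A twig is an edge incident to an end vertex of a tree. A reassociation move replaces a configuration of two adjacent trivalent vertices corresponding to $(ab)c$ by the one corresponding to $a(bc)$, or conversely. A signed reassociation move is allowed only when the two adjacent vertices involved carry the same sign, and after the move both vertices receive the opposite sign. *)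

theory Defs
  imports "HOL-Analysis.Analysis"
begin

text \<open>A bracketed product is a rooted binary plane tree; leaves carry the
  variable (index) sitting there.\<close>
datatype 'a btree = Lf 'a | Nd "'a btree" "'a btree"

fun fringe :: "'a btree \<Rightarrow> 'a list" where
  "fringe (Lf x) = [x]"
| "fringe (Nd a b) = fringe a @ fringe b"

inductive reassoc :: "'a btree \<Rightarrow> 'a btree \<Rightarrow> bool" where
  assoc_lr: "reassoc (Nd (Nd a b) c) (Nd a (Nd b c))"
| assoc_rl: "reassoc (Nd a (Nd b c)) (Nd (Nd a b) c)"
| congL: "reassoc a a' \<Longrightarrow> reassoc (Nd a b) (Nd a' b)"
| congR: "reassoc b b' \<Longrightarrow> reassoc (Nd a b) (Nd a b')"

text \<open>Rooted binary plane trees whose internal (trivalent) vertices carry a sign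
  (True = +, False = -).\<close>
datatype stree = SLf | SNd bool stree stree

fun shape :: "stree \<Rightarrow> unit btree" where
  "shape SLf = Lf ()"
| "shape (SNd s a b) = Nd (shape a) (shape b)"

inductive sreassoc :: "stree \<Rightarrow> stree \<Rightarrow> bool" where
  s_lr: "sreassoc (SNd s (SNd s a b) c) (SNd (\<not> s) a (SNd (\<not> s) b c))"
| s_rl: "sreassoc (SNd s a (SNd s b c)) (SNd (\<not> s) (SNd (\<not> s) a b) c)"
| s_congL: "sreassoc a a' \<Longrightarrow> sreassoc (SNd s a b) (SNd s a' b)"
| s_congR: "sreassoc b b' \<Longrightarrow> sreassoc (SNd s a b) (SNd s a b')"

text \<open>Eliahou--Kryuchkov conjecture (rooted form: two binary plane trees with the
  same number of twigs, i.e. the same number of leaves).\<close>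
definition EK_conjecture :: bool where
  "EK_conjecture \<longleftrightarrow>
     (\<forall>T1 T2 :: unit btree. length (fringe T1) = length (fringe T2) \<longrightarrow>
        (\<exists>S1 S2. shape S1 = T1 \<and> shape S2 = T2 \<and> sreassoc\<^sup>*\<^sup>* S1 S2))"

definition vi :: "real^3" where "vi = vector [1, 0, 0]"
definition vj :: "real^3" where "vj = vector [0, 1, 0]"
definition vk :: "real^3" where "vk = vector [0, 0, 1]"

fun eval_cp :: "('a \<Rightarrow> real^3) \<Rightarrow> 'a btree \<Rightarrow> real^3" where
  "eval_cp v (Lf x) = v x"
| "eval_cp v (Nd a b) = cross3 (eval_cp v a) (eval_cp v b)"

end

theory Submission
  imports Defs
begin

datatype c3 = CI | CJ | CK

fun nx :: "c3 \<Rightarrow> c3" where "nx CI = CJ" | "nx CJ = CK" | "nx CK = CI"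

fun ev :: "c3 \<Rightarrow> real^3" where "ev CI = vi" | "ev CJ = vj" | "ev CK = vk"

definition pm :: "real^3 \<Rightarrow> (real^3) set" where "pm x = {x, -x}"

lemma basis_cross:
  "cross3 (ev (nx X)) (ev (nx (nx X))) = ev X"
  "cross3 (ev (nx (nx X))) (ev (nx X)) = - ev X"
  by (cases X; simp add: cross3_simps vi_def vj_def vk_def)+

lemma ev_nz: "ev X \<noteq> 0"
  by (cases X; simp add: vec_eq_iff forall_3 vi_def vj_def vk_def vector_def)

lemma pm_cross1: "x \<in> pm (ev (nx X)) \<Longrightarrow> y \<in> pm (ev (nx (nx X))) \<Longrightarrow> cross3 x y \<in> pm (ev X)"
  using basis_cross by (auto simp: pm_def)
lemma pm_cross2: "x \<in> pm (ev (nx (nx X))) \<Longrightarrow> y \<in> pm (ev (nx X)) \<Longrightarrow> cross3 x y \<in> pm (ev X)"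
  using basis_cross by (auto simp: pm_def)

lemma pm_nz: "x \<in> pm (ev X) \<Longrightarrow> x \<noteq> 0"
  using ev_nz by (auto simp: pm_def)

lemma cross_assoc_pm: "x \<in> pm e \<Longrightarrow> z \<in> pm e \<Longrightarrow> cross3 (cross3 x y) z = cross3 x (cross3 y z)"
proof -
  have g: "cross3 (cross3 x y) x = cross3 x (cross3 y x)" for x y
    by (metis cross_skew cross_minus_right)
  assume "x \<in> pm e" "z \<in> pm e"
  then have "z = x \<or> z = -x" by (auto simp: pm_def)
  then show ?thesis using g by auto
qed

fun nlv :: "stree \<Rightarrow> nat" where
  "nlv SLf = 1" | "nlv (SNd s a b) = nlv a + nlv b"

fun lab :: "nat \<Rightarrow> stree \<Rightarrow> nat btree" where
  "lab k SLf = Lf k"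
| "lab k (SNd s a b) = Nd (lab k a) (lab (k + nlv a) b)"

fun lc :: "c3 \<Rightarrow> stree \<Rightarrow> c3 list" where
  "lc X SLf = [X]"
| "lc X (SNd s a b) = (if s then lc (nx X) a @ lc (nx (nx X)) b else lc (nx (nx X)) a @ lc (nx X) b)"

lemma len_lc: "length (lc X S) = nlv S"
  by (induction S arbitrary: X) auto

lemma nx3: "nx (nx (nx X)) = X" by (cases X) auto

lemma lc_pres: "sreassoc S S' \<Longrightarrow> lc X S = lc X S'"
  by (induction arbitrary: X rule: sreassoc.induct) (auto simp: nx3)

lemma nlv_pres: "sreassoc S S' \<Longrightarrow> nlv S = nlv S'"
  by (induction rule: sreassoc.induct) auto

lemma reassoc_lab: "sreassoc S S' \<Longrightarrow> reassoc (lab k S) (lab k S')"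
  by (induction arbitrary: k rule: sreassoc.induct)
     (auto simp: add.assoc nlv_pres intro: reassoc.intros)

definition hyp :: "(nat \<Rightarrow> real^3) \<Rightarrow> nat \<Rightarrow> c3 \<Rightarrow> stree \<Rightarrow> bool" where
  "hyp v k X S \<longleftrightarrow> (\<forall>p < nlv S. v (k + p) = ev (lc X S ! p))"

lemma hyp_split:
  assumes "hyp v k X (SNd s a b)"
  shows "hyp v k (if s then nx X else nx (nx X)) a"
    "hyp v (k + nlv a) (if s then nx (nx X) else nx X) b"
proof -
  show "hyp v k (if s then nx X else nx (nx X)) a"
    unfolding hyp_def
  proof (intro allI impI)
    fix p assume "p < nlv a"
    then show "v (k + p) = ev (lc (if s then nx X else nx (nx X)) a ! p)"
      using assms[unfolded hyp_def, rule_format, of p]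
      by (cases s) (auto simp: nth_append len_lc)
  qed
  show "hyp v (k + nlv a) (if s then nx (nx X) else nx X) b"
    unfolding hyp_def
  proof (intro allI impI)
    fix p assume "p < nlv b"
    then show "v (k + nlv a + p) = ev (lc (if s then nx (nx X) else nx X) b ! p)"
      using assms[unfolded hyp_def, rule_format, of "nlv a + p"]
      by (cases s) (auto simp: nth_append len_lc add.assoc)
  qed
qed

lemma eval_pm: "hyp v k X S \<Longrightarrow> eval_cp v (lab k S) \<in> pm (ev X)"
proof (induction S arbitrary: k X)
  case SLf
  then show ?case by (auto simp: hyp_def pm_def)
next
  case (SNd s a b)
  note h = hyp_split[OF SNd.prems]
  show ?case
  proof (cases s)
    case True
    then show ?thesis using SNd.IH(1)[OF h(1)] SNd.IH(2)[OF h(2)] by (simp add: pm_cross1)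
  next
    case False
    then show ?thesis using SNd.IH(1)[OF h(1)] SNd.IH(2)[OF h(2)] by (simp add: pm_cross2)
  qed
qed

lemma eval_pres: "sreassoc S S' \<Longrightarrow> hyp v k X S \<Longrightarrow> eval_cp v (lab k S) = eval_cp v (lab k S')"
proof (induction arbitrary: k X rule: sreassoc.induct)
  case (s_lr s a b c)
  note h1 = hyp_split[OF s_lr]
  note h2 = hyp_split[OF h1(1)]
  have ea: "eval_cp v (lab k a) \<in> pm (ev (if s then nx (nx X) else nx X))"
    using eval_pm[OF h2(1)] by (cases s) (auto simp: nx3)
  have ec: "eval_cp v (lab (k + (nlv a + nlv b)) c) \<in> pm (ev (if s then nx (nx X) else nx X))"
    using eval_pm[OF h1(2)] by (cases s) (auto simp: nx3 add.assoc)
  show ?case using cross_assoc_pm[OF ea ec] by (simp add: add.assoc)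
next
  case (s_rl s a b c)
  note h1 = hyp_split[OF s_rl]
  note h2 = hyp_split[OF h1(2)]
  have ea: "eval_cp v (lab k a) \<in> pm (ev (if s then nx X else nx (nx X)))"
    using eval_pm[OF h1(1)] by (cases s) (auto simp: nx3)
  have ec: "eval_cp v (lab (k + nlv a + nlv b) c) \<in> pm (ev (if s then nx X else nx (nx X)))"
    using eval_pm[OF h2(2)] by (cases s) (auto simp: nx3 add.assoc)
  show ?case using cross_assoc_pm[OF ea ec] by (simp add: add.assoc)
next
  case (s_congL a a' s b)
  note h1 = hyp_split[OF s_congL.prems]
  show ?case using s_congL.IH[OF h1(1)] s_congL.hyps by (simp add: nlv_pres)
next
  case (s_congR b b' s a)
  note h1 = hyp_split[OF s_congR.prems]
  show ?case using s_congR.IH[OF h1(2)] by simp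
qed


lemma fringe_map: "fringe (map_btree f T) = map f (fringe T)"
  by (induction T) auto

lemma nlv_shape: "nlv S = length (fringe (shape S))"
  by (induction S) auto

lemma lab_eq: "fringe T = [k..<k + length (fringe T)] \<Longrightarrow> shape S = map_btree (\<lambda>_. ()) T \<Longrightarrow> lab k S = T"
proof (induction T arbitrary: k S)
  case (Lf x)
  then show ?case by (cases S) auto
next
  case (Nd T1 T2)
  obtain s a b where S: "S = SNd s a b" and sa: "shape a = map_btree (\<lambda>_. ()) T1"
      and sb: "shape b = map_btree (\<lambda>_. ()) T2"
    using Nd.prems(2) by (cases S) auto
  have "fringe T1 @ fringe T2 = [k..<k + length (fringe T1)] @ [k + length (fringe T1)..<k + length (fringe T1) + length (fringe T2)]"
    using Nd.prems(1) upt_add_eq_append[of k "k + length (fringe T1)" "length (fringe T2)"] by (simp add: add.assoc)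
  then have f1: "fringe T1 = [k..<k + length (fringe T1)]"
    and f2: "fringe T2 = [k + length (fringe T1)..<k + length (fringe T1) + length (fringe T2)]"
    by (simp_all add: append_eq_append_conv)
  have na: "nlv a = length (fringe T1)" using sa by (simp add: nlv_shape fringe_map)
  show ?case using Nd.IH(1)[OF f1 sa] Nd.IH(2)[OF f2 sb] S na by simp
qed

lemma rtranclp_list:
  "r\<^sup>*\<^sup>* x y \<Longrightarrow> \<exists>ts. ts \<noteq> [] \<and> hd ts = x \<and> last ts = y \<and> (\<forall>t\<in>set ts. r\<^sup>*\<^sup>* x t) \<and>
     (\<forall>i < length ts - 1. r (ts ! i) (ts ! Suc i))"
proof (induction rule: converse_rtranclp_induct)
  case base
  then show ?case by (intro exI[of _ "[y]"]) auto
next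
  case (step x z)
  then obtain ts where ts: "ts \<noteq> []" "hd ts = z" "last ts = y" "\<forall>t\<in>set ts. r\<^sup>*\<^sup>* z t"
     "\<forall>i < length ts - 1. r (ts ! i) (ts ! Suc i)" by blast
  have "\<forall>i < length (x # ts) - 1. r ((x # ts) ! i) ((x # ts) ! Suc i)"
  proof (intro allI impI)
    fix i assume "i < length (x # ts) - 1"
    then show "r ((x # ts) ! i) ((x # ts) ! Suc i)"
      using ts step.hyps(1) by (cases i) (auto simp: hd_conv_nth)
  qed
  moreover have "\<forall>t\<in>set (x # ts). r\<^sup>*\<^sup>* x t"
    using ts step.hyps(1) by (auto intro: converse_rtranclp_into_rtranclp)
  ultimately show ?case using ts by (intro exI[of _ "x # ts"]) auto
qed

lemma star_pres: "sreassoc\<^sup>*\<^sup>* S t \<Longrightarrow> hyp v k X S \<Longrightarrow>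
   lc X t = lc X S \<and> nlv t = nlv S \<and> eval_cp v (lab k t) = eval_cp v (lab k S)"
proof (induction rule: rtranclp_induct)
  case base
  then show ?case by simp
next
  case (step y z)
  then have "hyp v k X y" by (simp add: hyp_def)
  then show ?case using step eval_pres[OF step(2)] lc_pres[OF step(2)] nlv_pres[OF step(2)] by simp
qed

theorem mainTheorem4:
  fixes n :: nat and L R :: "nat btree"
  assumes EK: EK_conjecture
    and hL: "fringe L = [1..<n+1]"
    and hR: "fringe R = [1..<n+1]"
  shows "\<exists>v :: nat \<Rightarrow> real^3. (\<forall>m \<in> {1..n}. v m \<in> {vi, vj, vk}) \<and>
           eval_cp v L = eval_cp v R \<and> eval_cp v L \<noteq> 0 \<and>
           (\<exists>ts. ts \<noteq> [] \<and> hd ts = L \<and> last ts = R \<and>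
                 (\<forall>t \<in> set ts. eval_cp v t \<noteq> 0) \<and>
                 (\<forall>i < length ts - 1. reassoc (ts ! i) (ts ! Suc i)))"
proof -
  have "length (fringe (map_btree (\<lambda>_. ()) L)) = length (fringe (map_btree (\<lambda>_. ()) R))"
    using hL hR by (simp add: fringe_map)
  then obtain S1 S2 where s1: "shape S1 = map_btree (\<lambda>_. ()) L" and s2: "shape S2 = map_btree (\<lambda>_. ()) R"
    and st: "sreassoc\<^sup>*\<^sup>* S1 S2"
    using EK unfolding EK_conjecture_def by blast
  have lL: "lab 1 S1 = L" using lab_eq[OF _ s1] hL by simp
  have lR: "lab 1 S2 = R" using lab_eq[OF _ s2] hR by simp
  define v where "v m = ev (lc CI S1 ! (m - 1))" for m
  have h1: "hyp v 1 CI S1" by (simp add: hyp_def v_def)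
  have vin: "\<forall>m \<in> {1..n}. v m \<in> {vi, vj, vk}"
  proof
    fix m show "v m \<in> {vi, vj, vk}" unfolding v_def by (cases "lc CI S1 ! (m - 1)") auto
  qed
  have nz: "eval_cp v (lab 1 t) \<noteq> 0" if "sreassoc\<^sup>*\<^sup>* S1 t" for t
    using star_pres[OF that h1] eval_pm[OF h1] pm_nz by metis
  obtain ts where ts: "ts \<noteq> []" "hd ts = S1" "last ts = S2" "\<forall>t\<in>set ts. sreassoc\<^sup>*\<^sup>* S1 t"
     "\<forall>i < length ts - 1. sreassoc (ts ! i) (ts ! Suc i)"
    using rtranclp_list[OF st] by blast
  have "eval_cp v L = eval_cp v R" using star_pres[OF st h1] lL lR by simp
  moreover have "eval_cp v L \<noteq> 0" using nz[of S1] lL by simp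
  moreover have "\<exists>ts. ts \<noteq> [] \<and> hd ts = L \<and> last ts = R \<and>
                 (\<forall>t \<in> set ts. eval_cp v t \<noteq> 0) \<and>
                 (\<forall>i < length ts - 1. reassoc (ts ! i) (ts ! Suc i))"
    apply (rule exI[of _ "map (lab 1) ts"])
    using ts nz lL lR by (auto simp: hd_map last_map reassoc_lab)
  ultimately show ?thesis using vin by blast
qed

end
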